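(* Let $Z=\mathbb R/\mathbb Z\times\mathbb R$ be the standard cylinder with universal covering $p_Z:\mathbb R^2\to Z$, $(x,y)\mapsto(x\bmod 1,y)$, and let $c$ be a closed curve in $Z$. If $c^2$ has a simple lift in $\mathbb R^2$, then every lift of $c^\infty$ in $\mathbb R^2$ is simple.
   Context: A closed curve is a continuous map $c:\mathbb R/\mathbb Z\to Z$; $c^2$ is the concatenation of two copies of $c$, and $c^\infty:\mathbb R\to Z$ is the composition of $c$ with the projection $\mathbb R\to\mathbb R/\mathbb Z$. A curve $\gamma:[0,1]\to X$ is simple if $\gamma(i)\neq\gamma(j)$ for all $i<j$ with $(i,j)\neq(0,1)$; a curve defined on $\mathbb R$ is simple if it is injective. A lift of a curve $\gamma$ is a curve $\widetilde\gamma$ with $p_Z\circ\widetilde\gamma=\gamma$. *)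

theory Defs
  imports "HOL-Analysis.Analysis"
begin

text \<open>The cylinder Z = R/Z x R is modelled (homeomorphically) as the subset
  sphere 0 1 x UNIV of complex x real; the covering map is
  p_Z(x,y) = (exp(2 pi i x), y).\<close>

definition pZ :: "real \<times> real \<Rightarrow> complex \<times> real" where
  "pZ = (\<lambda>(x, y). (cis (2 * pi * x), y))"

definition cylinder :: "(complex \<times> real) set" where
  "cylinder = range pZ"

text \<open>A closed curve R/Z -> Z is represented as a closed path c on [0,1]
  (c 0 = c 1). Its square is the concatenation c +++ c, and
  c^\<infinity> : R -> Z is c composed with the projection R -> R/Z.\<close>

definition curve_inf :: "(real \<Rightarrow> 'a) \<Rightarrow> real \<Rightarrow> 'a" where
  "curve_inf c t = c (frac t)"

end

theory Submission
  imports Defs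
begin

lemma int_valued_const:
  fixes h :: "'a::topological_space \<Rightarrow> real"
  assumes "connected S" "continuous_on S h" "\<And>z. z \<in> S \<Longrightarrow> h z \<in> \<int>" "a \<in> S" "b \<in> S"
  shows "h a = h b"
proof -
  have "h constant_on S"
  proof (rule continuous_discrete_range_constant[OF assms(1,2)])
    fix x assume x: "x \<in> S"
    show "\<exists>e>0. \<forall>y. y \<in> S \<and> h y \<noteq> h x \<longrightarrow> e \<le> norm (h y - h x)"
    proof (intro exI[of _ 1] conjI allI impI)
      fix y assume y: "y \<in> S \<and> h y \<noteq> h x"
      then obtain m n where mn: "h y = of_int m" "h x = of_int n" 
        using assms(3) x by (metis Ints_cases)
      with y have "m \<noteq> n" by auto
      then have "1 \<le> \<bar>m - n\<bar>" by linarith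
      then have "1 \<le> \<bar>real_of_int (m - n)\<bar>" by linarith
      then show "1 \<le> norm (h y - h x)" using mn by simp
    qed simp
  qed
  then show ?thesis using assms(4,5) by (auto simp: constant_on_def)
qed

lemma exp1_const:
  fixes h :: "'a::topological_space \<Rightarrow> complex"
  assumes "connected S" "continuous_on S h" "\<And>z. z \<in> S \<Longrightarrow> exp (h z) = 1" "a \<in> S" "b \<in> S"
  shows "h a = h b"
proof -
  have re: "Re (h z) = 0" and im: "Im (h z) / (2*pi) \<in> \<int>" if "z \<in> S" for z
  proof -
    from assms(3)[OF that] obtain n::int where "Re (h z) = 0" "Im (h z) = of_int (2*n) * pi"
      by (auto simp: exp_eq_1)
    then show "Re (h z) = 0" "Im (h z) / (2*pi) \<in> \<int>" by auto
  qed
  have c: "continuous_on S (\<lambda>z. Im (h z) / (2*pi))"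
    by (intro continuous_intros assms(2)) auto
  have "Im (h a) / (2*pi) = Im (h b) / (2*pi)"
    by (rule int_valued_const[OF assms(1) c im assms(4,5)])
  then have "Im (h a) = Im (h b)" by simp
  then show ?thesis using re assms(4,5) by (simp add: complex_eq_iff)
qed

lemma lift_convex:
  fixes f :: "'a::real_normed_vector \<Rightarrow> complex"
  assumes "convex S" "continuous_on S f" "\<And>z. z\<in>S \<Longrightarrow> f z \<noteq> 0"
  obtains g where "continuous_on S g" "\<And>z. z\<in>S \<Longrightarrow> f z = exp (g z)"
  using continuous_logarithm_on_contractible[OF assms(2) convex_imp_contractible[OF assms(1)] assms(3)] by blast

lemma core:
  fixes F :: "real \<Rightarrow> complex" and w :: complex
  assumes contF: "continuous_on UNIV F"
    and per: "\<And>t. F (t + 1) = F t + w"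
    and inj02: "\<And>a b. 0 \<le> a \<Longrightarrow> a < b \<Longrightarrow> b \<le> 2 \<Longrightarrow> F a = F b \<Longrightarrow> a = 0 \<and> b = 2"
  shows "inj F"
proof -
  have contc: "continuous_on S (\<lambda>t. F (g t))" if "continuous_on S g" for S and g :: "'z::topological_space \<Rightarrow> real"
    using continuous_on_compose2[OF contF that] by auto
  have perint: "F (t + of_int n) = F t + of_int n * w" for t n
  proof (induction n arbitrary: t rule: int_induct[where k=0])
    case base then show ?case by simp
  next
    case (step1 i)
    have "F (t + of_int (i + 1)) = F ((t + of_int i) + 1)" by (simp add: add.assoc)
    also have "\<dots> = F t + of_int i * w + w" using per step1 by simp
    finally show ?case by (simp add: algebra_simps)
  next
    case (step2 i)
    have "F (t + of_int i) = F ((t + of_int (i - 1)) + 1)" by (simp add: algebra_simps)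
    also have "\<dots> = F (t + of_int (i - 1)) + w" by (rule per)
    finally show ?case using step2 by (simp add: algebra_simps)
  qed
  have w0: "w \<noteq> 0"
  proof
    assume "w = 0"
    then have "F 0 = F 1" using per[of 0] by simp
    then show False using inj02[of 0 1] by simp
  qed
  have normal: "F (frac u + r) = F (frac u)" if "F (u + r) = F u" for u r
  proof -
    have "F (frac u + r) = F ((u + r) + of_int (- floor u))" by (simp add: frac_def algebra_simps)
    also have "\<dots> = F (u + r) + of_int (- floor u) * w" by (rule perint)
    also have "\<dots> = F u + of_int (- floor u) * w" using that by simp
    also have "\<dots> = F (u + of_int (- floor u))" by (rule perint[symmetric])
    also have "\<dots> = F (frac u)" by (simp add: frac_def)
    finally show ?thesis .
  qed
  have gap: "r > 1" if "r > 0" "F (u + r) = F u" for u r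
  proof (rule ccontr)
    assume "\<not> r > 1"
    have "F (frac u + r) = F (frac u)" using normal that by blast
    moreover have "0 \<le> frac u" "frac u < 1" by (auto simp: frac_lt_1)
    ultimately show False using inj02[of "frac u" "frac u + r"] that \<open>\<not> r > 1\<close> by auto
  qed
  show "inj F"
  proof (rule injI, rule ccontr)
    fix a b assume ab: "F a = F b" "a \<noteq> b"
    obtain u0 r0 where ur0: "r0 > 0" "F (u0 + r0) = F u0"
    proof (cases "a < b")
      case True then show ?thesis using that[of "b - a" a] ab by auto
    next
      case False then show ?thesis using that[of "a - b" b] ab by auto
    qed
    define S where "S = ({0..1} \<times> {1..r0}) \<inter> {p. F (fst p + snd p) = F (fst p)}"
    have "closed {p::real\<times>real. F (fst p + snd p) = F (fst p)}"
      by (intro closed_Collect_eq contc continuous_intros)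
    then have cS: "compact S" unfolding S_def
      by (intro compact_Int_closed compact_Times) auto
    have "(frac u0, r0) \<in> S" using normal[OF ur0(2)] gap[OF ur0] 
      by (auto simp: S_def frac_lt_1 less_imp_le)
    then have neS: "snd ` S \<noteq> {}" by auto
    have "compact (snd ` S)" by (intro compact_continuous_image continuous_intros cS)
    then obtain d where "d \<in> snd ` S" and dmin: "\<And>y. y \<in> snd ` S \<Longrightarrow> d \<le> y"
      using compact_attains_inf[OF _ neS] by blast
    then obtain x where xd: "(x, d) \<in> S" by auto
    then have x01: "0 \<le> x" "x \<le> 1" and d1: "1 \<le> d" "d \<le> r0" and Fxd: "F (x + d) = F x"
      by (auto simp: S_def)
    then have d1': "d > 1" using gap[of d x] by auto
    have mini: "F (u + r) \<noteq> F u" if "0 < r" "r < d" for u r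
    proof
      assume eq: "F (u + r) = F u"
      have "(frac u, r) \<in> S" using normal[OF eq] gap[OF that(1) eq] that d1
        by (auto simp: S_def frac_lt_1 less_imp_le)
      then have "d \<le> r" using dmin by force
      then show False using that by simp
    qed
    have mini2: "F p \<noteq> F q" if "p \<noteq> q" "\<bar>p - q\<bar> < d" for p q
    proof (cases "p < q")
      case True then show ?thesis using mini[of "q - p" p] that by auto
    next
      case False then show ?thesis using mini[of "p - q" q] that by auto
    qed

    define G where "G t = (if t \<le> d then F (x + t) else F (x + t - d))" for t
    have contG: "continuous_on UNIV G"
      unfolding G_def[abs_def]
      by (rule continuous_on_cases_le) (auto intro!: contc continuous_intros simp: Fxd)
    have Gle: "G t = F (x + t)" if "t \<le> d" for t using that by (simp add: G_def)
    have Ggt: "G t = F (x + t - d)" if "d \<le> t" for t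
      using that Fxd by (cases "t = d") (auto simp: G_def)
    have contG': "continuous_on A (\<lambda>t. G (g t))" if "continuous_on A g" for A and g :: "'z::topological_space \<Rightarrow> real"
      using continuous_on_compose2[OF contG that] by auto
    define s where "s a r = G (a + r) - G a" for a r
    define r1 where "r1 = min 1 (d/2)"
    define r2 where "r2 = max 1 (d/2)"
    define Q where "Q = {0..d} \<times> {r1..r2}"
    have r12: "0 < r1" "r1 \<le> 1" "r1 \<le> d/2" "1 \<le> r2" "d/2 \<le> r2" "r2 < d"
      using d1' by (auto simp: r1_def r2_def)
    have snz: "s a r \<noteq> 0" if "0 \<le> a" "a \<le> d" "0 < r" "r < d" for a r
    proof (cases "a + r \<le> d")
      case True
      then have "s a r = F (x + a + r) - F (x + a)" using that by (simp add: s_def Gle add.assoc)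
      moreover have "F (x + a + r) \<noteq> F (x + a)" using mini2[of "x + a + r" "x + a"] that by auto
      ultimately show ?thesis by simp
    next
      case False
      then have "s a r = F (x + a + r - d) - F (x + a)" using that by (simp add: s_def Gle Ggt add.assoc)
      moreover have "F (x + a + r - d) \<noteq> F (x + a)" using mini2[of "x + a + r - d" "x + a"] that by auto
      ultimately show ?thesis by simp
    qed
    have convQ: "convex Q" unfolding Q_def by (intro convex_Times convex_real_interval)
    have contsQ: "continuous_on Q (\<lambda>z. s (fst z) (snd z))"
      unfolding s_def by (intro continuous_intros contG' continuous_on_id)
    have snzQ: "s (fst z) (snd z) \<noteq> 0" if "z \<in> Q" for z
      using that r12 by (intro snz) (auto simp: Q_def)
    obtain Th where cTh: "continuous_on Q Th" and Th: "\<And>z. z\<in>Q \<Longrightarrow> s (fst z) (snd z) = exp (Th z)"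
      using lift_convex[OF convQ contsQ snzQ] by blast
    have ThE: "exp (Th (a, r)) = s a r" if "0 \<le> a" "a \<le> d" "r1 \<le> r" "r \<le> r2" for a r
      using Th[of "(a,r)"] that by (simp add: Q_def)
    have cThc: "continuous_on A (\<lambda>z. Th (p z))" if "continuous_on A p" "p ` A \<subseteq> Q" for A and p :: "real \<Rightarrow> real \<times> real"
      using continuous_on_compose2[OF cTh that] by auto
    have sd0: "s d r = s 0 r" if "0 < r" "r < d" for r
      using that Fxd by (simp add: s_def Gle Ggt)
    have A: "Th (d,1) - Th (0,1) = Th (d, d/2) - Th (0, d/2)"
    proof (rule exp1_const[of "{r1..r2}" "\<lambda>r. Th (d,r) - Th (0,r)"])
      show "continuous_on {r1..r2} (\<lambda>r. Th (d, r) - Th (0, r))"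
        using d1' by (intro continuous_intros cThc) (auto simp: Q_def)
      fix r assume r: "r \<in> {r1..r2}"
      then have "0 < r" "r < d" using r12 by auto
      then show "exp (Th (d, r) - Th (0, r)) = 1"
        using r d1' snz[of 0 r] sd0[of r] by (simp add: exp_diff ThE)
    qed (use r12 in auto)
    have half: "s (a + d/2) (d/2) = - s a (d/2)" if "0 \<le> a" "a \<le> d/2" for a
      using that d1' by (simp add: s_def Gle Ggt algebra_simps)
    have B: "Th (0 + d/2, d/2) - Th (0, d/2) - \<i> * pi = Th (d/2 + d/2, d/2) - Th (d/2, d/2) - \<i> * pi"
    proof (rule exp1_const[of "{0..d/2}" "\<lambda>a. Th (a + d/2, d/2) - Th (a, d/2) - \<i> * pi"])
      show "continuous_on {0..d/2} (\<lambda>a. Th (a + d/2, d/2) - Th (a, d/2) - \<i> * pi)"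
        using d1' r12 by (intro continuous_intros cThc) (auto simp: Q_def)
      fix a assume a: "a \<in> {0..d/2}"
      have "s a (d/2) \<noteq> 0" using a d1' by (intro snz) auto
      then show "exp (Th (a + d/2, d/2) - Th (a, d/2) - \<i> * pi) = 1"
        using a d1' r12 half[of a] by (simp add: exp_diff ThE)
    qed (use d1' in auto)
    define c0 where "c0 = Th (d/2, d/2) - Th (0, d/2)"
    have expc0: "exp c0 = -1"
      using half[of 0] snz[of 0 "d/2"] d1' r12 by (simp add: c0_def exp_diff ThE)
    have c0nz: "c0 \<noteq> 0" using expc0 by auto
    have tot: "Th (d, d/2) - Th (0, d/2) = 2 * c0"
    proof -
      have "Th (d, d/2) = 2 * Th (d/2,d/2) - Th (0,d/2)" using B by (simp add: algebra_simps)
      then show ?thesis by (simp add: c0_def algebra_simps)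
    qed
    have C: "Th (d - 1, 1) - Th (0, 1) = Th (0, 1) - Th (0, 1)"
    proof (rule exp1_const[of "{0..d-1}" "\<lambda>a. Th (a, 1) - Th (0, 1)"])
      show "continuous_on {0..d-1} (\<lambda>a. Th (a, 1) - Th (0, 1))"
        using d1' r12 by (intro continuous_intros cThc) (auto simp: Q_def)
      fix a assume a: "a \<in> {0..d-1}"
      have sa: "s a 1 = w" if "0 \<le> a" "a \<le> d - 1" for a
        using that per[of "x + a"] by (simp add: s_def Gle add.assoc)
      show "exp (Th (a, 1) - Th (0, 1)) = 1"
        using a d1' r12 sa[of a] sa[of 0] w0 by (simp add: exp_diff ThE)
    qed (use d1' in auto)
    define sg where "sg u r = F (u + r) - F u" for u r
    define p1 where "p1 = min 1 (d - 1)"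
    define p2 where "p2 = max 1 (d - 1)"
    define Q' where "Q' = {x..x+1} \<times> {p1..p2}"
    have p12: "0 < p1" "p1 \<le> 1" "p1 \<le> d - 1" "1 \<le> p2" "d - 1 \<le> p2" "p2 < d"
      using d1' by (auto simp: p1_def p2_def)
    have sgnz: "sg u r \<noteq> 0" if "0 < r" "r < d" for u r
      using mini[OF that, of u] by (simp add: sg_def)
    have convQ': "convex Q'" unfolding Q'_def by (intro convex_Times convex_real_interval)
    have contsQ': "continuous_on Q' (\<lambda>z. sg (fst z) (snd z))"
      unfolding sg_def by (intro continuous_intros contc continuous_on_id)
    have sgnzQ: "sg (fst z) (snd z) \<noteq> 0" if "z \<in> Q'" for z
      using that p12 by (intro sgnz) (auto simp: Q'_def)
    obtain Ph where cPh: "continuous_on Q' Ph" and Ph: "\<And>z. z\<in>Q' \<Longrightarrow> sg (fst z) (snd z) = exp (Ph z)"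
      using lift_convex[OF convQ' contsQ' sgnzQ] by blast
    have PhE: "exp (Ph (u, r)) = sg u r" if "x \<le> u" "u \<le> x + 1" "p1 \<le> r" "r \<le> p2" for u r
      using Ph[of "(u,r)"] that by (simp add: Q'_def)
    have cPhc: "continuous_on A (\<lambda>z. Ph (p z))" if "continuous_on A p" "p ` A \<subseteq> Q'" for A and p :: "real \<Rightarrow> real \<times> real"
      using continuous_on_compose2[OF cPh that] by auto
    have D1: "Ph (x+1, 1) - Ph (x, 1) = Ph (x+1, d-1) - Ph (x, d-1)"
    proof (rule exp1_const[of "{p1..p2}" "\<lambda>r. Ph (x+1,r) - Ph (x,r)"])
      show "continuous_on {p1..p2} (\<lambda>r. Ph (x+1, r) - Ph (x, r))"
        by (intro continuous_intros cPhc) (auto simp: Q'_def)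
      fix r assume r: "r \<in> {p1..p2}"
      have "sg (x+1) r = sg x r" using per[of "x + r"] per[of x] by (simp add: sg_def algebra_simps)
      moreover have "sg x r \<noteq> 0" using r p12 by (intro sgnz) auto
      ultimately show "exp (Ph (x+1, r) - Ph (x, r)) = 1"
        using r by (simp add: exp_diff PhE)
    qed (use p12 in auto)
    have D2: "Ph (x+1, 1) - Ph (x, 1) = Ph (x, 1) - Ph (x, 1)"
    proof (rule exp1_const[of "{x..x+1}" "\<lambda>u. Ph (u,1) - Ph (x,1)"])
      show "continuous_on {x..x+1} (\<lambda>u. Ph (u, 1) - Ph (x, 1))"
        using p12 by (intro continuous_intros cPhc) (auto simp: Q'_def)
      fix u assume u: "u \<in> {x..x+1}"
      have "sg u 1 = w" "sg x 1 = w" using per[of u] per[of x] by (simp_all add: sg_def)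
      then show "exp (Ph (u, 1) - Ph (x, 1)) = 1"
        using u p12 w0 by (simp add: exp_diff PhE)
    qed (use p12 in auto)
    have E: "Th (d-1, 1) - Ph (x + (d-1) + 1 - d, d-1) - \<i> * pi = Th (d, 1) - Ph (x + d + 1 - d, d-1) - \<i> * pi"
    proof (rule exp1_const[of "{d-1..d}" "\<lambda>a. Th (a, 1) - Ph (x + a + 1 - d, d-1) - \<i> * pi"])
      show "continuous_on {d-1..d} (\<lambda>a. Th (a, 1) - Ph (x + a + 1 - d, d-1) - \<i> * pi)"
        using p12 r12 d1' by (intro continuous_intros cPhc cThc) (auto simp: Q'_def Q_def)
      fix a assume a: "a \<in> {d-1..d}"
      have "s a 1 = - sg (x + a + 1 - d) (d-1)"
        using a by (simp add: s_def sg_def Gle Ggt algebra_simps)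
      moreover have "sg (x + a + 1 - d) (d-1) \<noteq> 0" using d1' by (intro sgnz) auto
      ultimately show "exp (Th (a, 1) - Ph (x + a + 1 - d, d-1) - \<i> * pi) = 1"
        using a p12 r12 d1' by (simp add: exp_diff PhE ThE)
    qed (use d1' in auto)
    have "Th (d, 1) - Th (0, 1) = 0"
      using C D1 D2 E by (simp add: algebra_simps)
    then show False using A tot c0nz by simp
  qed
qed

lemma pZ_eq:
  assumes "pZ p = pZ q"
  shows "snd p = snd q" "fst p - fst q \<in> \<int>"
proof -
  obtain p1 p2 q1 q2 where pq: "p = (p1,p2)" "q = (q1,q2)" by (cases p, cases q) auto
  from assms have e: "cis (2*pi*p1) = cis (2*pi*q1)" and "p2 = q2" by (auto simp: pZ_def pq)
  then show "snd p = snd q" by (simp add: pq)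
  from e have "exp (\<i> * complex_of_real (2*pi*p1)) = exp (\<i> * complex_of_real (2*pi*q1))"
    by (simp add: cis_conv_exp)
  then obtain n :: int where "\<i> * complex_of_real (2*pi*p1) = \<i> * complex_of_real (2*pi*q1) + of_int (2*n) * pi * \<i>"
    by (auto simp: exp_eq)
  then have "Im (\<i> * complex_of_real (2*pi*p1)) = Im (\<i> * complex_of_real (2*pi*q1) + of_int (2*n) * pi * \<i>)"
    by simp
  then have "2*pi*p1 = 2*pi*q1 + 2 * of_int n * pi" by simp
  then have "2*pi*(p1 - q1 - of_int n) = 0" by (simp add: algebra_simps)
  then have "p1 - q1 = of_int n" by simp
  then show "fst p - fst q \<in> \<int>" by (simp add: pq)
qed

lemma cc_frac:
  fixes c :: "real \<Rightarrow> 'a::topological_space"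
  assumes "c 1 = c 0" "u \<in> {0..1}"
  shows "(c +++ c) u = c (frac (2*u))"
proof -
  consider "u < 1/2" | "u = 1/2" | "1/2 < u" "u < 1" | "u = 1" using assms(2) by fastforce
  then show ?thesis
  proof cases
    case 1 then show ?thesis using assms by (simp add: joinpaths_def frac_eq)
  next
    case 2
    then have "(c +++ c) u = c (2*u)" by (simp add: joinpaths_def)
    moreover have "2*u = 1" using 2 by simp
    ultimately have "(c +++ c) u = c 1" by simp
    moreover have "frac (2*u) = 0"
    proof -
      have "2*u = 1" using 2 by simp
      then show ?thesis by simp
    qed
    ultimately show ?thesis using assms(1) by metis
  next
    case 3
    then have "floor (2*u) = 1" by (simp add: floor_eq_iff)
    then have "frac (2*u) = 2*u - 1" by (simp add: frac_def)
    then show ?thesis using 3 by (simp add: joinpaths_def)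
  next
    case 4
    have "frac (2::real) = 0" by (simp add: frac_def)
    moreover have "(c +++ c) u = c 1" using 4 by (simp add: joinpaths_def)
    moreover have "2 * u = 2" using 4 by simp
    ultimately show ?thesis using assms(1) by metis
  qed
qed

theorem lemma2p1:
  fixes c :: "real \<Rightarrow> complex \<times> real"
  assumes "path c" and "pathfinish c = pathstart c"
    and "path_image c \<subseteq> cylinder"
    and "\<exists>g :: real \<Rightarrow> real \<times> real. path g \<and> (\<forall>t\<in>{0..1}. pZ (g t) = (c +++ c) t)
            \<and> simple_path g"
  shows "\<forall>l :: real \<Rightarrow> real \<times> real. continuous_on UNIV l \<and> pZ \<circ> l = curve_inf c
            \<longrightarrow> inj l"
proof (intro allI impI)
  fix l :: "real \<Rightarrow> real \<times> real"
  assume "continuous_on UNIV l \<and> pZ \<circ> l = curve_inf c"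
  then have contl: "continuous_on UNIV l" and liftl: "\<And>t. pZ (l t) = c (frac t)"
    by (auto simp: fun_eq_iff curve_inf_def)
  obtain g where gp: "path g" and glift: "\<And>t. t\<in>{0..1} \<Longrightarrow> pZ (g t) = (c +++ c) t"
      and gs: "simple_path g"
    using assms(4) by blast
  have c10: "c 1 = c 0" using assms(2) by (simp add: pathfinish_def pathstart_def)
  have contl': "continuous_on S (\<lambda>t. l (h t))" if "continuous_on S h" for S and h :: "real \<Rightarrow> real"
    using continuous_on_compose2[OF contl that] by auto
  have Dint: "fst (l (t+1)) - fst (l t) \<in> \<int>" and Dsnd: "snd (l (t+1)) = snd (l t)" for t
  proof -
    have "pZ (l (t+1)) = pZ (l t)" using liftl by (simp add: frac_def)
    then show "fst (l (t+1)) - fst (l t) \<in> \<int>" "snd (l (t+1)) = snd (l t)" using pZ_eq by blast+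
  qed
  have Dconst: "fst (l (t+1)) - fst (l t) = fst (l (0+1)) - fst (l 0)" for t
  proof (rule int_valued_const[of UNIV "\<lambda>t. fst (l (t+1)) - fst (l t)"])
    show "continuous_on UNIV (\<lambda>t. fst (l (t + 1)) - fst (l t))"
      by (intro continuous_intros contl' continuous_on_id)
  qed (use Dint in auto)
  obtain k :: int where k: "fst (l 1) - fst (l 0) = of_int k"
    using Dint[of 0] by (auto elim: Ints_cases)
  define F where "F t = complex_of_real (fst (l t)) + \<i> * complex_of_real (snd (l t))" for t
  have contF: "continuous_on UNIV F" unfolding F_def[abs_def]
    by (intro continuous_intros contl' continuous_on_id)
  have Finj: "l a = l b" if "F a = F b" for a b
  proof -
    have "Re (F a) = Re (F b)" "Im (F a) = Im (F b)" using that by auto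
    then show ?thesis by (simp add: F_def prod_eq_iff)
  qed
  have per: "F (t + 1) = F t + of_int k" for t
  proof -
    have "fst (l (t+1)) = fst (l t) + of_int k" using Dconst[of t] k by simp
    then show ?thesis using Dsnd[of t] by (simp add: F_def)
  qed
  have Eint: "fst (g y) - fst (l (2*y)) \<in> \<int>" and Esnd: "snd (g y) = snd (l (2*y))" if "y \<in> {0..1}" for y
  proof -
    have "pZ (g y) = pZ (l (2*y))" using glift[OF that] liftl cc_frac[OF c10 that] by simp
    then show "fst (g y) - fst (l (2*y)) \<in> \<int>" "snd (g y) = snd (l (2*y))" using pZ_eq by blast+
  qed
  have Econst: "fst (g y) - fst (l (2*y)) = fst (g yy) - fst (l (2*yy))" if "y \<in> {0..1}" "yy \<in> {0..1}" for y yy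
  proof (rule int_valued_const[of "{0..1}" "\<lambda>y. fst (g y) - fst (l (2*y))"])
    have "continuous_on {0..1} g" using gp by (simp add: path_def)
    then show "continuous_on {0..1} (\<lambda>y. fst (g y) - fst (l (2*y)))"
      by (intro continuous_intros contl' continuous_on_id)
  qed (use Eint that in auto)
  have inj02: "a = 0 \<and> b = 2" if "0 \<le> a" "a < b" "b \<le> 2" "F a = F b" for a b
  proof -
    have lab: "l a = l b" using Finj that(4) .
    have sa: "a/2 \<in> {0..1}" and sb: "b/2 \<in> {0..1}" using that by auto
    have "g (a/2) = g (b/2)"
      using Econst[OF sa sb] Esnd[OF sa] Esnd[OF sb] lab by (simp add: prod_eq_iff)
    moreover have lf: "\<forall>x\<in>{0..1}. \<forall>y\<in>{0..1}. g x = g y \<longrightarrow> x = y \<or> x = 0 \<and> y = 1 \<or> x = 1 \<and> y = 0"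
      using gs by (simp add: simple_path_def loop_free_def)
    ultimately have "a/2 = b/2 \<or> a/2 = 0 \<and> b/2 = 1 \<or> a/2 = 1 \<and> b/2 = 0"
      using sa sb by blast
    then show ?thesis using that by auto
  qed
  have "inj F" by (rule core[OF contF per inj02]) auto
  then show "inj l" by (auto simp: inj_def F_def)
qed

end
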